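(* Let $A=\mathbb{C}[x,y,z]$, let $s,t\in A\setminus\{0\}$ be coprime and equip $A$ with the Poisson bracket $\{x,y\}=t s_z-s t_z$, $\{y,z\}=t s_x-s t_x$, $\{z,x\}=t s_y-s t_y$. Let $(\lambda,\mu)\in\mathbb{P}^1(\mathbb{C})$ and let $u$ be an irreducible factor in $A$ of $f_{\lambda,\mu}:=\lambda s-\mu t$. The following are equivalent: (1) $uA$ is Poisson primitive; (2) $uA$ is not residually null; (3) $u$ has multiplicity one as an irreducible factor of $f_{\lambda,\mu}$; (4) $uA$ is locally closed.
   Context: Subscripts denote partial derivatives. A Poisson ideal is an ideal $I$ with $\{a,I\}\subseteq I$ for all $a$; Poisson prime = Poisson and prime. The Poisson core of an ideal is the largest Poisson ideal it contains; a Poisson prime is Poisson primitive if it is the Poisson core of a maximal ideal. A Poisson ideal $I$ is residually null if the induced bracket on $A/I$ is zero. A Poisson prime $P$ is locally closed if it is not the intersection of the Poisson prime ideals strictly containing it. *)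

theory Defs
  imports Complex_Main "HOL-Computational_Algebra.Polynomial_Factorial" "HOL-Computational_Algebra.Field_as_Ring"
begin

text \<open>A = C[x,y,z], realised as nested univariate polynomials C[x][y][z]:
  the outermost variable is z, the middle one y, the innermost one x.\<close>
type_synonym cpoly3 = "complex poly poly poly"

definition varx :: cpoly3 where "varx = [:[:[:0, 1:]:]:]"
definition vary :: cpoly3 where "vary = [:[:0, 1:]:]"
definition varz :: cpoly3 where "varz = [:0, 1:]"

definition const3 :: "complex \<Rightarrow> cpoly3" where "const3 c = [:[:[:c:]:]:]"

definition dx :: "cpoly3 \<Rightarrow> cpoly3" where "dx p = map_poly (map_poly pderiv) p"
definition dy :: "cpoly3 \<Rightarrow> cpoly3" where "dy p = map_poly pderiv p"
definition dz :: "cpoly3 \<Rightarrow> cpoly3" where "dz p = pderiv p"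

definition jac :: "cpoly3 \<Rightarrow> cpoly3 \<Rightarrow> cpoly3 \<Rightarrow> cpoly3" where
  "jac f g h = dx f * (dy g * dz h - dz g * dy h)
             - dy f * (dx g * dz h - dz g * dx h)
             + dz f * (dx g * dy h - dy g * dx h)"

text \<open>The Poisson bracket with {x,y} = t s_z - s t_z, {y,z} = t s_x - s t_x,
  {z,x} = t s_y - s t_y, extended as a biderivation:
  {f,g} = t jac(f,g,s) - s jac(f,g,t).\<close>
definition pbr :: "cpoly3 \<Rightarrow> cpoly3 \<Rightarrow> cpoly3 \<Rightarrow> cpoly3 \<Rightarrow> cpoly3" where
  "pbr s t f g = t * jac f g s - s * jac f g t"

definition is_ideal :: "cpoly3 set \<Rightarrow> bool" where
  "is_ideal I \<longleftrightarrow> 0 \<in> I \<and> (\<forall>a\<in>I. \<forall>b\<in>I. a + b \<in> I) \<and> (\<forall>r. \<forall>a\<in>I. r * a \<in> I)"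

definition is_prime_ideal :: "cpoly3 set \<Rightarrow> bool" where
  "is_prime_ideal P \<longleftrightarrow> is_ideal P \<and> P \<noteq> UNIV \<and> (\<forall>a b. a * b \<in> P \<longrightarrow> a \<in> P \<or> b \<in> P)"

definition is_maximal_ideal :: "cpoly3 set \<Rightarrow> bool" where
  "is_maximal_ideal M \<longleftrightarrow> is_ideal M \<and> M \<noteq> UNIV \<and>
     (\<forall>J. is_ideal J \<and> M \<subseteq> J \<longrightarrow> J = M \<or> J = UNIV)"

definition principal_ideal :: "cpoly3 \<Rightarrow> cpoly3 set" where
  "principal_ideal u = {u * a | a. True}"

definition poisson_ideal :: "cpoly3 \<Rightarrow> cpoly3 \<Rightarrow> cpoly3 set \<Rightarrow> bool" where
  "poisson_ideal s t I \<longleftrightarrow> is_ideal I \<and> (\<forall>a. \<forall>b\<in>I. pbr s t a b \<in> I)"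

definition poisson_prime :: "cpoly3 \<Rightarrow> cpoly3 \<Rightarrow> cpoly3 set \<Rightarrow> bool" where
  "poisson_prime s t P \<longleftrightarrow> poisson_ideal s t P \<and> is_prime_ideal P"

definition is_poisson_core :: "cpoly3 \<Rightarrow> cpoly3 \<Rightarrow> cpoly3 set \<Rightarrow> cpoly3 set \<Rightarrow> bool" where
  "is_poisson_core s t P I \<longleftrightarrow> poisson_ideal s t P \<and> P \<subseteq> I \<and>
     (\<forall>J. poisson_ideal s t J \<and> J \<subseteq> I \<longrightarrow> J \<subseteq> P)"

definition poisson_primitive :: "cpoly3 \<Rightarrow> cpoly3 \<Rightarrow> cpoly3 set \<Rightarrow> bool" where
  "poisson_primitive s t P \<longleftrightarrow> poisson_prime s t P \<and>
     (\<exists>M. is_maximal_ideal M \<and> is_poisson_core s t P M)"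

definition residually_null :: "cpoly3 \<Rightarrow> cpoly3 \<Rightarrow> cpoly3 set \<Rightarrow> bool" where
  "residually_null s t I \<longleftrightarrow> poisson_ideal s t I \<and> (\<forall>a b. pbr s t a b \<in> I)"

definition locally_closed :: "cpoly3 \<Rightarrow> cpoly3 \<Rightarrow> cpoly3 set \<Rightarrow> bool" where
  "locally_closed s t P \<longleftrightarrow> poisson_prime s t P \<and>
     P \<noteq> \<Inter>{Q. poisson_prime s t Q \<and> P \<subset> Q}"

end

theory Submission
  imports Defs "HOL-Computational_Algebra.Fundamental_Theorem_Algebra"
begin


section \<open>Derivations\<close>

lemma additive_sum:
  fixes D :: "'a::ab_group_add \<Rightarrow> 'b::ab_group_add"
  assumes add: "\<And>a b. D (a + b) = D a + D b"
  shows "D (sum g A) = (\<Sum>x\<in>A. D (g x))"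
proof -
  have D0: "D 0 = 0" using add[of 0 0] by simp
  show ?thesis
  proof (cases "finite A")
    case True thus ?thesis by (induction A rule: finite_induct) (auto simp: D0 add)
  qed (simp add: D0)
qed

lemma map_poly_additive:
  fixes D :: "'a::ab_group_add \<Rightarrow> 'b::ab_group_add"
  assumes add: "\<And>a b. D (a + b) = D a + D b"
  shows "map_poly D (p + q) = map_poly D p + map_poly D q"
proof -
  have D0: "D 0 = 0" using add[of 0 0] by simp
  show ?thesis by (rule poly_eqI) (simp add: coeff_map_poly D0 add)
qed

lemma map_poly_leibniz:
  fixes D :: "'a::comm_ring \<Rightarrow> 'a"
  assumes add: "\<And>a b. D (a + b) = D a + D b"
    and mult: "\<And>a b. D (a * b) = D a * b + a * D b"
  shows "map_poly D (p * q) = map_poly D p * q + p * map_poly D q"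
proof -
  have D0: "D 0 = 0" using add[of 0 0] by simp
  show ?thesis
  proof (rule poly_eqI)
    fix n
    have "coeff (map_poly D (p * q)) n = D (\<Sum>i\<le>n. coeff p i * coeff q (n-i))"
      by (simp add: coeff_map_poly D0 coeff_mult)
    also have "\<dots> = (\<Sum>i\<le>n. D (coeff p i) * coeff q (n-i) + coeff p i * D (coeff q (n-i)))"
      by (simp add: additive_sum[OF add] mult)
    also have "\<dots> = coeff (map_poly D p * q + p * map_poly D q) n"
      by (simp add: coeff_mult coeff_map_poly D0 sum.distrib)
    finally show "coeff (map_poly D (p * q)) n = coeff (map_poly D p * q + p * map_poly D q) n" .
  qed
qed

lemma dz_add: "dz (a + b) = dz a + dz b" by (simp add: dz_def pderiv_add)
lemma dz_mult: "dz (a * b) = dz a * b + a * dz b" by (simp add: dz_def pderiv_mult algebra_simps)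
lemma dy_add: "dy (a + b) = dy a + dy b"
  unfolding dy_def by (rule map_poly_additive) (simp add: pderiv_add)
lemma dy_mult: "dy (a * b) = dy a * b + a * dy b"
  unfolding dy_def by (rule map_poly_leibniz) (simp_all add: pderiv_add pderiv_mult algebra_simps)
lemma mpd_add: "map_poly pderiv (a + b) = map_poly pderiv a + map_poly pderiv (b :: complex poly poly)"
  by (rule map_poly_additive) (simp add: pderiv_add)
lemma mpd_mult: "map_poly pderiv (a * b) = map_poly pderiv a * b + a * map_poly pderiv (b :: complex poly poly)"
  by (rule map_poly_leibniz) (simp_all add: pderiv_add pderiv_mult algebra_simps)
lemma dx_add: "dx (a + b) = dx a + dx b"
  unfolding dx_def by (rule map_poly_additive) (rule mpd_add)
lemma dx_mult: "dx (a * b) = dx a * b + a * dx b"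
  unfolding dx_def by (rule map_poly_leibniz) (rule mpd_add, rule mpd_mult)

lemma additive_minus:
  assumes add: "\<And>a b. D (a + b) = D a + (D b :: 'b::ab_group_add)"
  shows "D (a - b) = D a - D (b :: 'a :: ab_group_add)"
  using add[of "a - b" b] by (simp add: algebra_simps)

lemma dx_diff: "dx (a - b) = dx a - dx b" by (rule additive_minus) (rule dx_add)
lemma dy_diff: "dy (a - b) = dy a - dy b" by (rule additive_minus) (rule dy_add)
lemma dz_diff: "dz (a - b) = dz a - dz b" by (rule additive_minus) (rule dz_add)

lemma dx_0[simp]: "dx 0 = 0" by (simp add: dx_def)
lemma dy_0[simp]: "dy 0 = 0" by (simp add: dy_def)
lemma dz_0[simp]: "dz 0 = 0" by (simp add: dz_def)

lemma dx_const[simp]: "dx (const3 c) = 0" by (simp add: dx_def const3_def map_poly_pCons)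
lemma dy_const[simp]: "dy (const3 c) = 0" by (simp add: dy_def const3_def map_poly_pCons)
lemma dz_const[simp]: "dz (const3 c) = 0" by (simp add: dz_def const3_def)

lemma dx_vars[simp]: "dx varx = 1" "dx vary = 0" "dx varz = 0"
  by (simp_all add: dx_def varx_def vary_def varz_def map_poly_pCons pderiv_pCons one_pCons)
lemma dy_vars[simp]: "dy varx = 0" "dy vary = 1" "dy varz = 0"
  by (simp_all add: dy_def varx_def vary_def varz_def map_poly_pCons pderiv_pCons one_pCons)
lemma dz_vars[simp]: "dz varx = 0" "dz vary = 0" "dz varz = 1"
  by (simp_all add: dz_def varx_def vary_def varz_def pderiv_pCons one_pCons)

lemma const3_1: "const3 1 = 1" by (simp add: const3_def one_pCons)
lemma const3_0[simp]: "const3 0 = 0" by (simp add: const3_def)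
lemma d_one[simp]: "dx 1 = 0" "dy 1 = 0" "dz 1 = 0"
  using dx_const[of 1] dy_const[of 1] dz_const[of 1] by (simp_all add: const3_1)

lemma d_cmult: "dx (const3 c * a) = const3 c * dx a" "dy (const3 c * a) = const3 c * dy a"
   "dz (const3 c * a) = const3 c * dz a"
  by (simp_all add: dx_mult dy_mult dz_mult)

section \<open>Bracket\<close>

definition wx :: "cpoly3 \<Rightarrow> cpoly3 \<Rightarrow> cpoly3" where "wx s t = t * dx s - s * dx t"
definition wy :: "cpoly3 \<Rightarrow> cpoly3 \<Rightarrow> cpoly3" where "wy s t = t * dy s - s * dy t"
definition wz :: "cpoly3 \<Rightarrow> cpoly3 \<Rightarrow> cpoly3" where "wz s t = t * dz s - s * dz t"

lemma pbr_expand: "pbr s t a b =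
   (dy a * dz b - dz a * dy b) * wx s t + (dz a * dx b - dx a * dz b) * wy s t
   + (dx a * dy b - dy a * dx b) * wz s t"
  unfolding pbr_def jac_def wx_def wy_def wz_def by (simp add: algebra_simps)

lemma pbr_add: "pbr s t b (x + y) = pbr s t b x + pbr s t b y"
  unfolding pbr_expand by (simp add: dx_add dy_add dz_add algebra_simps)

lemma pbr_mult: "pbr s t b (x * y) = x * pbr s t b y + y * pbr s t b x"
  unfolding pbr_expand by (simp add: dx_mult dy_mult dz_mult algebra_simps)

lemma pbr_diff: "pbr s t b (x - y) = pbr s t b x - pbr s t b y"
  by (rule additive_minus) (rule pbr_add)

lemma pbr_power: "x * pbr s t b (x ^ n) = of_nat n * x ^ n * pbr s t b x"
proof (induction n)
  case (Suc n)
  have "x * pbr s t b (x ^ Suc n) = x * (x * pbr s t b (x ^ n)) + x * (x ^ n * pbr s t b x)"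
    by (simp add: pbr_mult algebra_simps)
  also have "\<dots> = of_nat (Suc n) * x ^ Suc n * pbr s t b x"
    using Suc by (simp add: algebra_simps)
  finally show ?case .
qed (simp add: pbr_expand)

lemma pbr_vars: "pbr s t varx e = dy e * wz s t - dz e * wy s t"
  "pbr s t vary e = dz e * wx s t - dx e * wz s t"
  "pbr s t varz e = dx e * wy s t - dy e * wx s t"
  by (simp_all add: pbr_expand algebra_simps)



lemma const3_mult: "const3 a * const3 b = const3 (a * b)" by (simp add: const3_def)
lemma const3_add: "const3 a + const3 b = const3 (a + b)" by (simp add: const3_def)
lemma const3_diff: "const3 a - const3 b = const3 (a - b)" by (simp add: const3_def)

lemma dvd_const3_cancel:
  assumes "c \<noteq> 0" "u dvd const3 c * w" shows "u dvd w"
proof -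
  have "w = const3 (1/c) * (const3 c * w)" using assms(1)
    by (simp add: mult.assoc[symmetric] const3_mult const3_1)
  thus ?thesis using assms(2) by (metis dvd_mult)
qed

lemma principal_ideal_iff: "e \<in> principal_ideal u \<longleftrightarrow> u dvd e"
  by (auto simp: principal_ideal_def dvd_def mult.commute)

lemma is_ideal_principal: "is_ideal (principal_ideal u)"
  unfolding is_ideal_def by (auto simp: principal_ideal_iff)

lemma prime_ideal_principal:
  assumes "irreducible u" shows "is_prime_ideal (principal_ideal u)"
proof -
  have p: "prime_elem u" using assms by (simp add: irreducible_imp_prime_elem)
  have "1 \<notin> principal_ideal u" using assms by (auto simp: principal_ideal_iff irreducible_def)
  hence "principal_ideal u \<noteq> UNIV" by blast
  thus ?thesis unfolding is_prime_ideal_def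
    using is_ideal_principal p
    by (auto simp: principal_ideal_iff prime_elem_dvd_mult_iff)
qed

lemma w_identities:
  fixes lam mu :: complex and s t :: cpoly3
  defines "f \<equiv> const3 lam * s - const3 mu * t"
  shows "const3 lam * wx s t = t * dx f - f * dx t"
    "const3 lam * wy s t = t * dy f - f * dy t"
    "const3 lam * wz s t = t * dz f - f * dz t"
    "const3 mu * wx s t = s * dx f - f * dx s"
    "const3 mu * wy s t = s * dy f - f * dy s"
    "const3 mu * wz s t = s * dz f - f * dz s"
  unfolding f_def wx_def wy_def wz_def by (simp_all only: dx_diff dy_diff dz_diff d_cmult) (simp_all add: algebra_simps)

definition wdec :: "cpoly3 \<Rightarrow> cpoly3 \<Rightarrow> cpoly3 \<Rightarrow> cpoly3 \<Rightarrow> bool" where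
  "wdec s t u c \<longleftrightarrow> (\<exists>mx my mz. wx s t = c * dx u + u * mx \<and> wy s t = c * dy u + u * my
      \<and> wz s t = c * dz u + u * mz)"

lemma multne1:
  assumes "(lam, mu) \<noteq> (0, 0)" and "irreducible u" and "u dvd (const3 lam * s - const3 mu * t)"
    and "multiplicity u (const3 lam * s - const3 mu * t) \<noteq> 1"
  shows "u dvd wx s t \<and> u dvd wy s t \<and> u dvd wz s t"
proof -
  define f where "f = const3 lam * s - const3 mu * t"
  have "\<exists>v. f = u^2 * v"
  proof (cases "f = 0")
    case True thus ?thesis by auto
  next
    case False
    have nu: "\<not> is_unit u" using assms(2) by (simp add: irreducible_def)
    have "1 \<le> multiplicity u f" using multiplicity_geI[OF False nu, of 1] assms(3) f_def by simp
    hence "2 \<le> multiplicity u f" using assms(4) f_def by simp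
    hence "u^2 dvd f" by (rule multiplicity_dvd')
    thus ?thesis by (auto simp: dvd_def)
  qed
  then obtain v where v: "f = u^2 * v" by blast
  have dd: "u dvd dx f" "u dvd dy f" "u dvd dz f"
    unfolding v by (simp_all add: dx_mult dy_mult dz_mult power2_eq_square)
  have uf: "u dvd f" unfolding v by (simp add: power2_eq_square)
  have gen: "u dvd h * dx f - f * dx h \<and> u dvd h * dy f - f * dy h \<and> u dvd h * dz f - f * dz h" for h
    using dd uf by (meson dvd_diff dvd_mult dvd_mult2)
  note wi = w_identities[where lam=lam and mu=mu and s=s and t=t, folded f_def]
  have all: "u dvd const3 c * wx s t \<and> u dvd const3 c * wy s t \<and> u dvd const3 c * wz s t"
    if "c = lam \<or> c = mu" for c
    using that gen[of t] gen[of s] unfolding wi by (auto simp: wi)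
  show ?thesis
  proof (cases "lam = 0")
    case True
    hence "mu \<noteq> 0" using assms(1) by auto
    thus ?thesis using all[of mu] dvd_const3_cancel by blast
  next
    case False
    thus ?thesis using all[of lam] dvd_const3_cancel by blast
  qed
qed

lemma mult1:
  assumes "coprime s t"
    and "(lam, mu) \<noteq> (0, 0)" and "irreducible u"
    and "multiplicity u (const3 lam * s - const3 mu * t) = 1"
  shows "\<exists>c. \<not> u dvd c \<and> wdec s t u c"
proof -
  define f where "f = const3 lam * s - const3 mu * t"
  have nu: "\<not> is_unit u" using assms(3) by (simp add: irreducible_def)
  have pu: "prime_elem u" using assms(3) by (simp add: irreducible_imp_prime_elem)
  have f0: "f \<noteq> 0" using assms(4) f_def by auto
  have "u ^ 1 dvd f" using multiplicity_dvd'[of 1 u f] assms(4) f_def by simp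
  then obtain v where v: "f = u * v" by (auto simp: dvd_def)
  have nv: "\<not> u dvd v"
  proof
    assume "u dvd v"
    hence "u^2 dvd f" by (auto simp: v power2_eq_square)
    hence "2 \<le> multiplicity u f" using multiplicity_geI[OF f0 nu] by blast
    thus False using assms(4) f_def by simp
  qed
  have nst: False if "u dvd s" "u dvd t"
    using that assms(1) nu by (meson coprime_common_divisor)
  have dec: "const3 c * wx s t = (h * v) * dx u + u * (h * dx v - v * dx h) \<and>
        const3 c * wy s t = (h * v) * dy u + u * (h * dy v - v * dy h) \<and>
        const3 c * wz s t = (h * v) * dz u + u * (h * dz v - v * dz h)"
    if "const3 c * wx s t = h * dx f - f * dx h" "const3 c * wy s t = h * dy f - f * dy h"
       "const3 c * wz s t = h * dz f - f * dz h" for c h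
    using that unfolding v by (simp add: dx_mult dy_mult dz_mult algebra_simps)
  have fin: "\<exists>c. \<not> u dvd c \<and> wdec s t u c"
    if "c0 \<noteq> 0" "\<not> u dvd h" "const3 c0 * wx s t = h * dx f - f * dx h"
       "const3 c0 * wy s t = h * dy f - f * dy h" "const3 c0 * wz s t = h * dz f - f * dz h" for c0 h
  proof -
    note d = dec[OF that(3-5)]
    have inv: "const3 (1/c0) * (const3 c0 * w) = w" for w
      using that(1) by (simp add: mult.assoc[symmetric] const3_mult const3_1)
    define c where "c = const3 (1/c0) * h * v"
    have "\<not> u dvd const3 (1/c0)"
    proof
      assume "u dvd const3 (1/c0)"
      hence "u dvd const3 (1/c0) * const3 c0" by simp
      thus False using that(1) nu by (simp add: const3_mult const3_1)
    qed
    hence nc: "\<not> u dvd c" unfolding c_def using pu that(2) nv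
      by (simp add: prime_elem_dvd_mult_iff)
    have sc: "W = (const3 (1/c0) * (h * v)) * D + u * (const3 (1/c0) * M)"
      if "const3 c0 * W = (h * v) * D + u * M" for W D M
    proof -
      have "W = const3 (1/c0) * (const3 c0 * W)" using inv by simp
      also have "\<dots> = const3 (1/c0) * ((h * v) * D + u * M)" using that by simp
      finally show ?thesis by (simp add: distrib_left mult.assoc mult.left_commute)
    qed
    have "wdec s t u c" unfolding wdec_def c_def
      using sc[OF d[THEN conjunct1]] sc[OF d[THEN conjunct2, THEN conjunct1]]
        sc[OF d[THEN conjunct2, THEN conjunct2]] by (auto simp: mult.assoc)
    thus ?thesis using nc by blast
  qed
  show ?thesis
  proof (cases "lam = 0")
    case True
    hence mu: "mu \<noteq> 0" using assms(2) by auto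
    have "\<not> u dvd s"
    proof
      assume us: "u dvd s"
      have "f = - (const3 mu * t)" using True unfolding f_def by simp
      hence "u dvd const3 mu * t" using v by (metis dvd_minus_iff dvd_triv_left)
      hence "u dvd t" using dvd_const3_cancel[OF mu] by blast
      thus False using nst us by blast
    qed
    thus ?thesis using fin[OF mu] w_identities[where lam=lam and mu=mu and s=s and t=t] unfolding f_def by blast
  next
    case False
    have "\<not> u dvd t"
    proof
      assume ut: "u dvd t"
      have "u dvd f" using v by simp
      hence "u dvd const3 lam * s" unfolding f_def using ut
        by (metis add_diff_cancel_left' diff_add_cancel dvd_add dvd_mult)
      hence "u dvd s" using dvd_const3_cancel[OF False] by blast
      thus False using nst ut by blast
    qed
    thus ?thesis using fin[OF False] w_identities[where lam=lam and mu=mu and s=s and t=t] unfolding f_def by blast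
  qed
qed



section \<open>Bezout in field polynomial rings\<close>

lemma field_bezout:
  fixes P Q :: "'k::field poly"
  assumes irr: "irreducible P" and nd: "\<not> P dvd Q"
  shows "\<exists>A B. A * P + B * Q = 1"
proof -
  define I where "I = {A * P + B * Q | A B. True}"
  have PI: "P \<in> I" unfolding I_def by (rule CollectI, rule exI[of _ 1], rule exI[of _ 0]) simp
  have P0: "P \<noteq> 0" using irr by auto
  have closed: "x - k * y \<in> I" if "x \<in> I" "y \<in> I" for x y k
  proof -
    from that obtain A B A' B' where "x = A * P + B * Q" "y = A' * P + B' * Q" unfolding I_def by blast
    hence "x - k * y = (A - k * A') * P + (B - k * B') * Q" by (simp add: algebra_simps)
    thus ?thesis unfolding I_def by blast
  qed
  define n where "n = (LEAST n. \<exists>d\<in>I. d \<noteq> 0 \<and> degree d = n)"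
  have ex: "\<exists>d\<in>I. d \<noteq> 0 \<and> degree d = n" unfolding n_def
    by (rule LeastI_ex) (use PI P0 in blast)
  then obtain d where d: "d \<in> I" "d \<noteq> 0" "degree d = n" by blast
  have minimal: "\<And>e. e \<in> I \<Longrightarrow> e \<noteq> 0 \<Longrightarrow> n \<le> degree e" unfolding n_def
    by (rule Least_le) blast
  have divides: "d dvd x" if "x \<in> I" for x
  proof (rule ccontr)
    assume "\<not> d dvd x"
    hence r0: "x mod d \<noteq> 0" by (simp add: mod_eq_0_iff_dvd)
    have "x mod d = x - (x div d) * d" by (simp add: minus_div_mult_eq_mod)
    hence "x mod d \<in> I" using closed[OF that d(1)] by simp
    hence "n \<le> degree (x mod d)" using minimal r0 by blast
    moreover have "degree (x mod d) < degree d" using degree_mod_less'[OF d(2) r0] .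
    ultimately show False using d(3) by simp
  qed
  have QI: "Q \<in> I" unfolding I_def by (rule CollectI, rule exI[of _ 0], rule exI[of _ 1]) simp
  have "d dvd P" using divides PI by blast
  then obtain e where e: "P = d * e" by (auto simp: dvd_def)
  have "is_unit d \<or> is_unit e" using irreducibleD[OF irr e] .
  moreover have "\<not> is_unit e"
  proof
    assume "is_unit e"
    hence "P dvd d" using e by (metis dvd_mult_unit_iff dvd_refl mult.commute)
    hence "P dvd Q" using divides[OF QI] dvd_trans by blast
    thus False using nd by blast
  qed
  ultimately have ud: "is_unit d" by blast
  then obtain k where "1 = d * k" by (auto simp: dvd_def)
  moreover obtain A B where "d = A * P + B * Q" using d(1) unfolding I_def by blast
  ultimately have "(k * A) * P + (k * B) * Q = 1" by (simp add: algebra_simps)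
  thus ?thesis by blast
qed

section \<open>Elimination\<close>

lemma clear_denom:
  fixes X :: "'a :: {factorial_semiring,semiring_Gcd,ring_gcd,idom_divide,
                     semiring_gcd_mult_normalize} fract poly"
  obtains d X' where "d \<noteq> 0" "smult (to_fract d) X = fract_poly X'"
proof -
  obtain c p' where cp: "X = smult c (fract_poly p')" by (rule content_decompose_fract)
  obtain a b where ab: "c = Fract a b" "b \<noteq> 0" by (cases c)
  have "smult (to_fract b) X = fract_poly (smult a p')"
    using ab by (simp add: cp Fract_conv_to_fract)
  thus ?thesis using that ab(2) by blast
qed

lemma elim_poly:
  fixes p q :: "'a :: {factorial_semiring,semiring_Gcd,ring_gcd,idom_divide,
                     semiring_gcd_mult_normalize} poly"
  assumes irr: "irreducible p" and deg: "degree p \<noteq> 0" and nd: "\<not> p dvd q"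
  shows "\<exists>A B r. r \<noteq> 0 \<and> A * p + B * q = [:r:]"
proof -
  have i: "irreducible (fract_poly p)" and c: "content p = 1"
    using nonconst_poly_irreducible_iff[OF deg] irr by auto
  have "\<not> fract_poly p dvd fract_poly q" using fract_poly_dvdD[OF _ c] nd by blast
  then obtain A B where AB: "A * fract_poly p + B * fract_poly q = 1"
    using field_bezout[OF i] by blast
  obtain dA A' where A: "dA \<noteq> 0" "smult (to_fract dA) A = fract_poly A'" by (rule clear_denom)
  obtain dB B' where B: "dB \<noteq> 0" "smult (to_fract dB) B = fract_poly B'" by (rule clear_denom)
  have "smult (to_fract (dA * dB)) (A * fract_poly p + B * fract_poly q)
      = fract_poly (smult dB A' * p + smult dA B' * q)"
  proof -
    have "smult (to_fract (dA * dB)) (A * fract_poly p + B * fract_poly q)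
       = smult (to_fract dB) (smult (to_fract dA) A) * fract_poly p
         + smult (to_fract dA) (smult (to_fract dB) B) * fract_poly q"
      by (simp add: smult_add_right mult.commute mult.left_commute)
    also have "\<dots> = fract_poly (smult dB A' * p + smult dA B' * q)"
      by (simp add: A(2) B(2))
    finally show ?thesis .
  qed
  hence "fract_poly (smult dB A' * p + smult dA B' * q) = [:to_fract (dA * dB):]"
    unfolding AB by simp
  moreover have "fract_poly [:dA * dB:] = [:to_fract (dA * dB):]" by (simp add: map_poly_pCons)
  ultimately have "fract_poly (smult dB A' * p + smult dA B' * q) = fract_poly [:dA * dB:]"
    by simp
  hence "smult dB A' * p + smult dA B' * q = [:dA * dB:]" by (simp only: fract_poly_eq_iff)
  hence "smult dB A' * p + smult dA B' * q = [:dA * dB:] \<and> dA * dB \<noteq> 0" using A(1) B(1) by simp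
  thus ?thesis by blast
qed



section \<open>Evaluation\<close>

definition ev2 :: "complex \<Rightarrow> complex \<Rightarrow> complex poly poly \<Rightarrow> complex" where
  "ev2 a b q = poly (poly q [:b:]) a"
definition ev :: "complex \<Rightarrow> complex \<Rightarrow> complex \<Rightarrow> cpoly3 \<Rightarrow> complex" where
  "ev a b c q = ev2 a b (poly q [:[:c:]:])"

lemma ev2_hom: "ev2 a b (x + y) = ev2 a b x + ev2 a b y" "ev2 a b (x * y) = ev2 a b x * ev2 a b y"
  "ev2 a b 0 = 0" "ev2 a b (x - y) = ev2 a b x - ev2 a b y" "ev2 a b 1 = 1"
  by (simp_all add: ev2_def)
lemma ev_hom: "ev a b c (x + y) = ev a b c x + ev a b c y" "ev a b c (x * y) = ev a b c x * ev a b c y"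
  "ev a b c 0 = 0" "ev a b c (x - y) = ev a b c x - ev a b c y" "ev a b c 1 = 1"
  by (simp_all add: ev_def ev2_hom)
lemma ev_pow: "ev a b c (x ^ n) = ev a b c x ^ n"
  by (induction n) (simp_all add: ev_hom)
lemma ev_const3[simp]: "ev a b c (const3 k) = k" by (simp add: ev_def ev2_def const3_def)
lemma ev_vars[simp]: "ev a b c varx = a" "ev a b c vary = b" "ev a b c varz = c"
  by (simp_all add: ev_def ev2_def varx_def vary_def varz_def)

lemma poly_hom_comm:
  assumes add: "\<And>x y. \<phi> (x + y) = \<phi> x + \<phi> y" and mult: "\<And>x y. \<phi> (x * y) = \<phi> x * \<phi> y"
    and z: "\<phi> 0 = 0"
  shows "\<phi> (poly q X) = poly (map_poly \<phi> q) (\<phi> X)"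
  by (induction q) (simp_all add: map_poly_pCons z add mult)

lemma ev_as_poly: "ev a b c q = poly (map_poly (ev2 a b) q) c"
proof -
  have "ev a b c q = ev2 a b (poly q [:[:c:]:])" by (simp add: ev_def)
  also have "\<dots> = poly (map_poly (ev2 a b) q) (ev2 a b [:[:c:]:])"
    by (rule poly_hom_comm) (simp_all add: ev2_hom)
  finally show ?thesis by (simp add: ev2_def)
qed

lemma ev2_as_poly: "ev2 a b q = poly (map_poly (\<lambda>x. poly x a) q) b"
proof -
  have "ev2 a b q = poly (poly q [:b:]) a" by (simp add: ev2_def)
  also have "\<dots> = poly (map_poly (\<lambda>x. poly x a) q) (poly [:b:] a)"
    by (rule poly_hom_comm) simp_all
  finally show ?thesis by simp
qed

lemma nv1: "(q :: complex poly) \<noteq> 0 \<Longrightarrow> \<exists>a. poly q a \<noteq> 0"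
  using poly_all_0_iff_0 by blast

lemma nv2c: assumes "poly (coeff q j) a \<noteq> 0" shows "\<exists>b. ev2 a b q \<noteq> 0"
proof -
  have "coeff (map_poly (\<lambda>x. poly x a) q) j \<noteq> 0" using assms by (simp add: coeff_map_poly)
  hence "map_poly (\<lambda>x. poly x a) q \<noteq> 0" by auto
  then obtain b where "poly (map_poly (\<lambda>x. poly x a) q) b \<noteq> 0" using nv1 by blast
  thus ?thesis by (auto simp: ev2_as_poly)
qed

lemma nv2: assumes "q \<noteq> 0" shows "\<exists>a b. ev2 a b q \<noteq> 0"
proof -
  have "coeff q (degree q) \<noteq> 0" using assms by simp
  then obtain a where "poly (coeff q (degree q)) a \<noteq> 0" using nv1 by blast
  thus ?thesis using nv2c by blast
qed

lemma nv3c: assumes "ev2 a b (coeff g k) \<noteq> 0" shows "\<exists>c. ev a b c g \<noteq> 0"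
proof -
  have "coeff (map_poly (ev2 a b) g) k \<noteq> 0" using assms by (simp add: coeff_map_poly ev2_hom)
  hence "map_poly (ev2 a b) g \<noteq> 0" by auto
  then obtain c where "poly (map_poly (ev2 a b) g) c \<noteq> 0" using nv1 by blast
  thus ?thesis by (auto simp: ev_as_poly)
qed

lemma root1: "degree (q :: complex poly) > 0 \<Longrightarrow> \<exists>z. poly q z = 0"
  using fundamental_theorem_of_algebra constant_degree by (metis neq0_conv)

section \<open>Shapes of irreducibles\<close>

lemma const3_unit: "c \<noteq> 0 \<Longrightarrow> is_unit (const3 c)"
  by (metis const3_1 const3_mult dvd_triv_left mult.commute field_class.field_inverse)

lemma irr_shape:
  fixes u :: cpoly3
  assumes "irreducible u"
  shows "degree u > 0 \<or> (\<exists>u0. u = [:u0:] \<and> degree u0 > 0 \<and> irreducible u0)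
     \<or> (\<exists>u00. u = [:[:u00:]:] \<and> degree u00 > 0 \<and> irreducible u00)"
proof (cases "degree u > 0")
  case False
  then obtain u0 where u0: "u = [:u0:]" by (metis degree_0_id neq0_conv)
  have i0: "irreducible u0" using irreducible_const_poly_iff[of u0] assms u0 by simp
  show ?thesis
  proof (cases "degree u0 > 0")
    case False
    then obtain u00 where u00: "u0 = [:u00:]" by (metis degree_0_id neq0_conv)
    have i00: "irreducible u00" using irreducible_const_poly_iff[of u00] i0 u00 by simp
    show ?thesis
    proof (cases "degree u00 > 0")
      case False
      then obtain c where "u00 = [:c:]" by (metis degree_0_id neq0_conv)
      hence "u = const3 c" using u0 u00 by (simp add: const3_def)
      moreover have "c \<noteq> 0" using assms \<open>u = const3 c\<close> by auto
      ultimately show ?thesis using assms const3_unit by (auto simp: irreducible_def)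
    qed (use u0 u00 i00 in blast)
  qed (use u0 i0 in blast)
qed blast



lemma ev_const_poly[simp]: "ev a b c [:r:] = ev2 a b r" by (simp add: ev_def)
lemma ev2_const_poly[simp]: "ev2 a b [:r:] = poly r a" by (simp add: ev2_def)

lemma zero_point:
  fixes u g :: cpoly3
  assumes irr: "irreducible u" and nd: "\<not> u dvd g"
  shows "\<exists>a b c. ev a b c u = 0 \<and> ev a b c g \<noteq> 0"
proof -
  consider (Z) "degree u > 0" | (Y) u0 where "u = [:u0:]" "degree u0 > 0" "irreducible u0"
    | (X) u00 where "u = [:[:u00:]:]" "degree u00 > 0" "irreducible u00"
    using irr_shape[OF irr] by (elim disjE exE conjE) auto
  thus ?thesis
  proof cases
    case Z
    obtain A B r where r: "r \<noteq> 0" "A * u + B * g = [:r:]"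
      using elim_poly[OF irr _ nd] Z by auto
    have l: "lead_coeff u \<noteq> 0" using irr by auto
    obtain a b where ab: "ev2 a b (r * lead_coeff u) \<noteq> 0" using nv2[of "r * lead_coeff u"] r l by auto
    hence abr: "ev2 a b r \<noteq> 0" and abl: "ev2 a b (lead_coeff u) \<noteq> 0" by (auto simp: ev2_hom)
    have "degree (map_poly (ev2 a b) u) = degree u" by (rule map_poly_degree_eq) (rule abl)
    then obtain c where c: "poly (map_poly (ev2 a b) u) c = 0" using root1[of "map_poly (ev2 a b) u"] Z by auto
    hence cu: "ev a b c u = 0" by (simp add: ev_as_poly)
    have "ev a b c (A * u + B * g) = ev2 a b r" using r by simp
    hence "ev a b c g \<noteq> 0" using cu abr by (auto simp: ev_hom)
    thus ?thesis using cu by blast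
  next
    case Y
    from nd obtain k where k: "\<not> u0 dvd coeff g k" using Y(1) const_poly_dvd_iff by blast
    obtain A B r where r: "r \<noteq> 0" "A * u0 + B * coeff g k = [:r:]"
      using elim_poly[OF Y(3) _ k] Y(2) by auto
    have l: "lead_coeff u0 \<noteq> 0" using Y(3) by auto
    obtain a where a: "poly (r * lead_coeff u0) a \<noteq> 0" using nv1[of "r * lead_coeff u0"] r l by auto
    hence ar: "poly r a \<noteq> 0" and al: "poly (lead_coeff u0) a \<noteq> 0" by auto
    have "degree (map_poly (\<lambda>x. poly x a) u0) = degree u0" by (rule map_poly_degree_eq) (rule al)
    then obtain b where b: "poly (map_poly (\<lambda>x. poly x a) u0) b = 0"
      using root1[of "map_poly (\<lambda>x. poly x a) u0"] Y(2) by auto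
    hence bu: "ev2 a b u0 = 0" by (simp add: ev2_as_poly)
    have "ev2 a b (A * u0 + B * coeff g k) = poly r a" using r by simp
    hence "ev2 a b (coeff g k) \<noteq> 0" using bu ar by (auto simp: ev2_hom)
    then obtain c where "ev a b c g \<noteq> 0" using nv3c by blast
    moreover have "ev a b c u = 0" using bu Y(1) by simp
    ultimately show ?thesis by blast
  next
    case X
    from nd obtain k where k: "\<not> [:u00:] dvd coeff g k" using X(1) const_poly_dvd_iff by blast
    then obtain j where j: "\<not> u00 dvd coeff (coeff g k) j" using const_poly_dvd_iff by blast
    obtain A B where AB: "A * u00 + B * coeff (coeff g k) j = 1" using field_bezout[OF X(3) j] by blast
    obtain a where a: "poly u00 a = 0" using root1 X(2) by blast
    have "poly (A * u00 + B * coeff (coeff g k) j) a = 1" using AB by simp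
    hence "poly (coeff (coeff g k) j) a \<noteq> 0" using a by auto
    then obtain b where "ev2 a b (coeff g k) \<noteq> 0" using nv2c by blast
    then obtain c where "ev a b c g \<noteq> 0" using nv3c by blast
    moreover have "ev a b c u = 0" using a X(1) by simp
    ultimately show ?thesis by blast
  qed
qed

section \<open>Point ideals\<close>

definition ptideal :: "complex \<Rightarrow> complex \<Rightarrow> complex \<Rightarrow> cpoly3 set" where
  "ptideal a b c = {q. ev a b c q = 0}"

lemma ptideal_ideal: "is_ideal (ptideal a b c)"
  by (auto simp: is_ideal_def ptideal_def ev_hom)

lemma ptideal_ne: "ptideal a b c \<noteq> UNIV"
proof -
  have "1 \<notin> ptideal a b c" by (simp add: ptideal_def ev_hom)
  thus ?thesis by blast
qed

lemma ptideal_prime: "is_prime_ideal (ptideal a b c)"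
  unfolding is_prime_ideal_def using ptideal_ideal ptideal_ne
  by (auto simp: ptideal_def ev_hom)

lemma ptideal_maximal: "is_maximal_ideal (ptideal a b c)"
  unfolding is_maximal_ideal_def
proof (intro conjI allI impI)
  show "is_ideal (ptideal a b c)" by (rule ptideal_ideal)
  show "ptideal a b c \<noteq> UNIV" by (rule ptideal_ne)
  fix J assume J: "is_ideal J \<and> ptideal a b c \<subseteq> J"
  show "J = ptideal a b c \<or> J = UNIV"
  proof (cases "J \<subseteq> ptideal a b c")
    case True thus ?thesis using J by blast
  next
    case False
    then obtain e where e: "e \<in> J" "ev a b c e \<noteq> 0" by (auto simp: ptideal_def)
    have "e - const3 (ev a b c e) \<in> ptideal a b c" by (simp add: ptideal_def ev_hom)
    hence m: "e - const3 (ev a b c e) \<in> J" using J by blast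
    have "const3 (ev a b c e) = e + (-1) * (e - const3 (ev a b c e))" by simp
    hence "const3 (ev a b c e) \<in> J" using J e(1) m unfolding is_ideal_def by metis
    hence "const3 (1 / ev a b c e) * const3 (ev a b c e) \<in> J" using J unfolding is_ideal_def by blast
    hence one: "1 \<in> J" using e(2) by (simp add: const3_mult const3_1)
    have "\<forall>r. r \<in> J" using J one unfolding is_ideal_def by (metis mult.right_neutral)
    thus ?thesis by blast
  qed
qed



lemma pderiv_const_closed:
  fixes H :: "'a::{idom,ring_char_0} poly set"
  assumes pd: "\<And>h. h \<in> H \<Longrightarrow> pderiv h \<in> H"
  shows "h \<in> H \<Longrightarrow> h \<noteq> 0 \<Longrightarrow> \<exists>k. k \<noteq> 0 \<and> [:k:] \<in> H"
proof (induction "degree h" arbitrary: h rule: less_induct)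
  case less
  show ?case
  proof (cases "degree h = 0")
    case True
    then obtain k where k: "h = [:k:]" by (rule degree_eq_zeroE)
    thus ?thesis using less.prems by auto
  next
    case False
    hence "pderiv h \<noteq> 0" by (simp add: pderiv_eq_0_iff)
    moreover have "degree (pderiv h) < degree h" using False by (simp add: degree_pderiv)
    ultimately show ?thesis using less pd by blast
  qed
qed

lemma reduce_const:
  fixes J :: "'a::{idom,ring_char_0} poly set"
  assumes pd: "\<And>e. e \<in> J \<Longrightarrow> pderiv e \<in> J"
    and diff: "\<And>a b. a \<in> J \<Longrightarrow> b \<in> J \<Longrightarrow> a - b \<in> J"
    and mul: "\<And>q. [:u0:] dvd q \<Longrightarrow> q \<in> J"
    and cancel: "\<And>c n. u0 dvd of_nat (Suc n) * c \<Longrightarrow> u0 dvd c"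
  shows "e \<in> J \<Longrightarrow> \<not> [:u0:] dvd e \<Longrightarrow> \<exists>e0. [:e0:] \<in> J \<and> \<not> u0 dvd e0"
proof (induction "degree e" arbitrary: e rule: less_induct)
  case less
  show ?case
  proof (cases "degree e = 0")
    case True
    then obtain k where k: "e = [:k:]" by (rule degree_eq_zeroE)
    thus ?thesis using less.prems by (auto simp: const_poly_dvd_const_poly_iff)
  next
    case False
    show ?thesis
    proof (cases "[:u0:] dvd pderiv e")
      case False2: False
      moreover have "degree (pderiv e) < degree e" using False by (simp add: degree_pderiv)
      ultimately show ?thesis using less pd by blast
    next
      case True
      have dv: "u0 dvd coeff e (Suc n)" for n
      proof -
        have "u0 dvd coeff (pderiv e) n" using True const_poly_dvd_iff[of u0 "pderiv e"] by blast
        hence "u0 dvd of_nat (Suc n) * coeff e (Suc n)" by (simp only: coeff_pderiv)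
        thus ?thesis by (rule cancel)
      qed
      define q where "q = e - [:coeff e 0:]"
      have "u0 dvd coeff q n" for n
        by (cases n) (simp_all add: q_def dv)
      hence "[:u0:] dvd q" by (simp add: const_poly_dvd_iff)
      hence "q \<in> J" by (rule mul)
      hence "[:coeff e 0:] \<in> J" using diff[OF less.prems(1)] unfolding q_def by fastforce
      moreover have "\<not> u0 dvd coeff e 0"
      proof
        assume "u0 dvd coeff e 0"
        hence "u0 dvd coeff e n" for n using dv by (cases n) auto
        thus False using less.prems(2) by (simp add: const_poly_dvd_iff)
      qed
      ultimately show ?thesis by blast
    qed
  qed
qed

lemma of_nat_unit1: "is_unit (of_nat (Suc n) :: complex poly)"
proof -
  have "(of_nat (Suc n) :: complex) \<noteq> 0" by (rule of_nat_neq_0)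
  hence "is_unit (of_nat (Suc n) :: complex)" by (simp add: dvd_field_iff)
  thus ?thesis by (simp add: of_nat_poly is_unit_const_poly_iff del: of_nat_Suc)
qed
lemma of_nat_unit2: "is_unit (of_nat (Suc n) :: complex poly poly)"
  using of_nat_unit1[of n] by (simp add: of_nat_poly[of "Suc n"] is_unit_const_poly_iff del: of_nat_Suc)

lemma ideal_diff: "is_ideal J \<Longrightarrow> a \<in> J \<Longrightarrow> b \<in> J \<Longrightarrow> a - b \<in> J"
proof -
  assume J: "is_ideal J" and a: "a \<in> J" and b: "b \<in> J"
  have "(-1) * b \<in> J" using J b unfolding is_ideal_def by blast
  hence "a + (-1) * b \<in> J" using J a unfolding is_ideal_def by blast
  thus ?thesis by simp
qed
lemma ideal_mult: "is_ideal J \<Longrightarrow> a \<in> J \<Longrightarrow> r * a \<in> J"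
  unfolding is_ideal_def by blast
lemma ideal_mult2: "is_ideal J \<Longrightarrow> a \<in> J \<Longrightarrow> a * r \<in> J"
  using ideal_mult[of J a r] by (simp add: mult.commute)
lemma ideal_add: "is_ideal J \<Longrightarrow> a \<in> J \<Longrightarrow> b \<in> J \<Longrightarrow> a + b \<in> J"
  unfolding is_ideal_def by blast
lemma ideal_neg: "is_ideal J \<Longrightarrow> a \<in> J \<Longrightarrow> - a \<in> J"
  using ideal_mult[of J a "-1"] by simp
lemma ideal_dvd: "is_ideal J \<Longrightarrow> u \<in> J \<Longrightarrow> u dvd q \<Longrightarrow> q \<in> J"
  unfolding is_ideal_def by (auto simp: dvd_def mult.commute)
lemma ideal_one: "is_ideal J \<Longrightarrow> 1 \<in> J \<Longrightarrow> J = UNIV"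
proof -
  assume J: "is_ideal J" "1 \<in> J"
  have "r \<in> J" for r using ideal_mult[OF J, of r] by simp
  thus ?thesis by blast
qed

lemma d_c1: "dx [:h:] = [:map_poly pderiv h:]" "dy [:h:] = [:pderiv h:]" "dz [:h:] = 0"
  by (simp_all add: dx_def dy_def dz_def map_poly_pCons)
lemma d_c2: "dx [:[:h:]:] = [:[:pderiv h:]:]" "dy [:[:h:]:] = 0" "dz [:[:h:]:] = 0"
  by (simp_all add: dx_def dy_def dz_def map_poly_pCons)



lemma brk_mod:
  assumes "wdec s t u c"
  shows "\<exists>m. pbr s t varx e = c * (dy e * dz u - dz e * dy u) + u * m"
    "\<exists>m. pbr s t vary e = c * (dz e * dx u - dx e * dz u) + u * m"
    "\<exists>m. pbr s t varz e = c * (dx e * dy u - dy e * dx u) + u * m"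
proof -
  obtain mx my mz where w: "wx s t = c * dx u + u * mx" "wy s t = c * dy u + u * my"
    "wz s t = c * dz u + u * mz" using assms unfolding wdec_def by blast
  show "\<exists>m. pbr s t varx e = c * (dy e * dz u - dz e * dy u) + u * m"
    by (rule exI[of _ "dy e * mz - dz e * my"]) (simp add: pbr_vars w algebra_simps)
  show "\<exists>m. pbr s t vary e = c * (dz e * dx u - dx e * dz u) + u * m"
    by (rule exI[of _ "dz e * mx - dx e * mz"]) (simp add: pbr_vars w algebra_simps)
  show "\<exists>m. pbr s t varz e = c * (dx e * dy u - dy e * dx u) + u * m"
    by (rule exI[of _ "dx e * my - dy e * mx"]) (simp add: pbr_vars w algebra_simps)
qed

lemma delta_in:
  assumes wd: "wdec s t u c" and J: "is_ideal J" and P: "\<forall>a. \<forall>b\<in>J. pbr s t a b \<in> J"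
    and uJ: "u \<in> J" and e: "e \<in> J"
  shows "c * (dy e * dz u - dz e * dy u) \<in> J" "c * (dz e * dx u - dx e * dz u) \<in> J"
    "c * (dx e * dy u - dy e * dx u) \<in> J"
proof -
  have gen: "X \<in> J" if "\<exists>m. pbr s t v e = X + u * m" for X v
  proof -
    from that obtain m where m: "pbr s t v e = X + u * m" by blast
    have "pbr s t v e \<in> J" using P e by blast
    moreover have "u * m \<in> J" using ideal_mult2[OF J uJ] by blast
    ultimately have "pbr s t v e - u * m \<in> J" by (rule ideal_diff[OF J])
    thus ?thesis using m by simp
  qed
  show "c * (dy e * dz u - dz e * dy u) \<in> J" by (rule gen) (rule brk_mod(1)[OF wd])
  show "c * (dz e * dx u - dx e * dz u) \<in> J" by (rule gen) (rule brk_mod(2)[OF wd])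
  show "c * (dx e * dy u - dy e * dx u) \<in> J" by (rule gen) (rule brk_mod(3)[OF wd])
qed

lemma not_dvd_pderiv:
  fixes u :: "'a::{idom,ring_char_0} poly"
  assumes "degree u > 0" shows "\<not> u dvd pderiv u"
proof
  assume d: "u dvd pderiv u"
  have "pderiv u \<noteq> 0" using assms by (simp add: pderiv_eq_0_iff)
  hence "degree u \<le> degree (pderiv u)" using dvd_imp_degree_le[OF d] by blast
  thus False using assms by (simp add: degree_pderiv)
qed

lemma const3_in_one: "is_ideal J \<Longrightarrow> const3 k \<in> J \<Longrightarrow> k \<noteq> 0 \<Longrightarrow> 1 \<in> J"
  using ideal_mult[of J "const3 k" "const3 (1/k)"] by (simp add: const3_mult const3_1)

definition keyprop :: "cpoly3 \<Rightarrow> cpoly3 \<Rightarrow> cpoly3 \<Rightarrow> cpoly3 \<Rightarrow> bool" where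
  "keyprop s t u g \<longleftrightarrow> (\<forall>J. is_ideal J \<longrightarrow> (\<forall>a. \<forall>b\<in>J. pbr s t a b \<in> J) \<longrightarrow> u \<in> J
      \<longrightarrow> (\<exists>e\<in>J. \<not> u dvd e) \<longrightarrow> (\<forall>e. g * e \<in> J \<longrightarrow> e \<in> J) \<longrightarrow> 1 \<in> J)"

lemma level2_const:
  assumes J: "is_ideal J" and st: "\<And>h. [:[:h:]:] \<in> J \<Longrightarrow> [:[:pderiv h:]:] \<in> J"
    and h: "[:[:h:]:] \<in> J" "h \<noteq> 0"
  shows "1 \<in> J"
proof -
  obtain k where "k \<noteq> 0" "[:k:] \<in> {h. [:[:h:]:] \<in> J}"
    using pderiv_const_closed[of "{h. [:[:h:]:] \<in> J}" h] st h by auto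
  thus ?thesis using const3_in_one[OF J, of k] by (simp add: const3_def)
qed

lemma key:
  assumes irr: "irreducible u" and nc: "\<not> u dvd c" and wd: "wdec s t u c"
  shows "\<exists>g. \<not> u dvd g \<and> keyprop s t u g"
proof -
  have pu: "prime_elem u" using irr by (simp add: irreducible_imp_prime_elem)
  consider (Z) "degree u > 0" | (Y) u0 where "u = [:u0:]" "degree u0 > 0" "irreducible u0"
    | (X) u00 where "u = [:[:u00:]:]" "degree u00 > 0" "irreducible u00"
    using irr_shape[OF irr] by (elim disjE exE conjE) auto
  thus ?thesis
  proof cases
    case Z
    define g where "g = c * dz u"
    have "\<not> u dvd dz u" using not_dvd_pderiv[OF Z] by (simp add: dz_def)
    hence ng: "\<not> u dvd g" using nc pu by (simp add: g_def prime_elem_dvd_mult_iff)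
    have "keyprop s t u g" unfolding keyprop_def
    proof (intro allI impI)
      fix J assume J: "is_ideal J" and P: "\<forall>a. \<forall>b\<in>J. pbr s t a b \<in> J" and uJ: "u \<in> J"
        and ex: "\<exists>e\<in>J. \<not> u dvd e" and sat: "\<forall>e. g * e \<in> J \<longrightarrow> e \<in> J"
      note di = delta_in[OF wd J P uJ]
      have st1: "[:pderiv h:] \<in> J" if "[:h:] \<in> J" for h
      proof -
        have "c * (dy [:h:] * dz u - dz [:h:] * dy u) \<in> J" by (rule di(1)[OF that])
        hence "g * [:pderiv h:] \<in> J" by (simp add: d_c1 g_def algebra_simps)
        thus ?thesis using sat by blast
      qed
      have st2: "[:[:pderiv h:]:] \<in> J" if "[:[:h:]:] \<in> J" for h
      proof -
        have "c * (dz [:[:h:]:] * dx u - dx [:[:h:]:] * dz u) \<in> J" by (rule di(2)[OF that])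
        hence "- (g * [:[:pderiv h:]:]) \<in> J" by (simp add: d_c2 g_def algebra_simps)
        hence "g * [:[:pderiv h:]:] \<in> J" using ideal_neg[OF J] by fastforce
        thus ?thesis using sat by blast
      qed
      from ex obtain e where e: "e \<in> J" "\<not> u dvd e" by blast
      obtain A B r where r: "r \<noteq> 0" "A * u + B * e = [:r:]"
        using elim_poly[OF irr _ e(2)] Z by auto
      have "A * u + B * e \<in> J" using uJ e(1) by (intro ideal_add[OF J] ideal_mult[OF J])
      hence "[:r:] \<in> J" using r by simp
      then obtain k where k: "k \<noteq> 0" "[:k:] \<in> {h. [:h:] \<in> J}"
        using pderiv_const_closed[of "{h. [:h:] \<in> J}" r] st1 r(1) by auto
      show "1 \<in> J" by (rule level2_const[OF J st2, of k]) (use k in auto)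
    qed
    thus ?thesis using ng by blast
  next
    case Y
    define g where "g = c * dy u"
    have dyu: "dy u = [:pderiv u0:]" "dz u = 0" using Y(1) by (simp_all add: d_c1)
    have "\<not> u dvd dy u" using not_dvd_pderiv[OF Y(2)] Y(1) dyu
      by (simp add: const_poly_dvd_const_poly_iff)
    hence ng: "\<not> u dvd g" using nc pu by (simp add: g_def prime_elem_dvd_mult_iff)
    have "keyprop s t u g" unfolding keyprop_def
    proof (intro allI impI)
      fix J assume J: "is_ideal J" and P: "\<forall>a. \<forall>b\<in>J. pbr s t a b \<in> J" and uJ: "u \<in> J"
        and ex: "\<exists>e\<in>J. \<not> u dvd e" and sat: "\<forall>e. g * e \<in> J \<longrightarrow> e \<in> J"
      note di = delta_in[OF wd J P uJ]
      have pd: "pderiv e \<in> J" if "e \<in> J" for e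
      proof -
        have "c * (dy e * dz u - dz e * dy u) \<in> J" by (rule di(1)[OF that])
        hence "- (g * dz e) \<in> J" by (simp add: dyu g_def algebra_simps)
        hence "g * dz e \<in> J" using ideal_neg[OF J] by fastforce
        thus ?thesis using sat by (simp add: dz_def)
      qed
      from ex obtain e where e: "e \<in> J" "\<not> [:u0:] dvd e" using Y(1) by blast
      obtain e0 where e0: "[:e0:] \<in> J" "\<not> u0 dvd e0"
      proof -
        have "\<exists>e0. [:e0:] \<in> J \<and> \<not> u0 dvd e0"
        proof (rule reduce_const[OF pd ideal_diff[OF J] _ _ e])
          fix q assume "[:u0:] dvd q" thus "q \<in> J" using ideal_dvd[OF J uJ] Y(1) by blast
        next
          fix c' n assume "u0 dvd of_nat (Suc n) * c'"
          thus "u0 dvd c'" using dvd_mult_unit_iff'[OF of_nat_unit2] by blast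
        qed
        thus ?thesis using that by blast
      qed
      obtain A B r where r: "r \<noteq> 0" "A * u0 + B * e0 = [:r:]"
        using elim_poly[OF Y(3) _ e0(2)] Y(2) by auto
      have "[:A:] * u + [:B:] * [:e0:] \<in> J" using uJ e0(1) by (intro ideal_add[OF J] ideal_mult[OF J])
      moreover have "[:A:] * u + [:B:] * [:e0:] = [:[:r:]:]" using r(2) Y(1) by (simp add: mult.commute)
      ultimately have rJ: "[:[:r:]:] \<in> J" by simp
      have st: "[:[:pderiv h:]:] \<in> J" if "[:[:h:]:] \<in> J" for h
      proof -
        have "c * (dx [:[:h:]:] * dy u - dy [:[:h:]:] * dx u) \<in> J" by (rule di(3)[OF that])
        hence "g * [:[:pderiv h:]:] \<in> J" by (simp add: d_c2 g_def algebra_simps)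
        thus ?thesis using sat by blast
      qed
      show "1 \<in> J" by (rule level2_const[OF J st rJ r(1)])
    qed
    thus ?thesis using ng by blast
  next
    case X
    define g where "g = c * dx u"
    have dxu: "dx u = [:[:pderiv u00:]:]" "dy u = 0" "dz u = 0" using X(1) by (simp_all add: d_c2)
    have "\<not> u dvd dx u" using not_dvd_pderiv[OF X(2)] X(1) dxu
      by (simp add: const_poly_dvd_const_poly_iff)
    hence ng: "\<not> u dvd g" using nc pu by (simp add: g_def prime_elem_dvd_mult_iff)
    have "keyprop s t u g" unfolding keyprop_def
    proof (intro allI impI)
      fix J assume J: "is_ideal J" and P: "\<forall>a. \<forall>b\<in>J. pbr s t a b \<in> J" and uJ: "u \<in> J"
        and ex: "\<exists>e\<in>J. \<not> u dvd e" and sat: "\<forall>e. g * e \<in> J \<longrightarrow> e \<in> J"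
      note di = delta_in[OF wd J P uJ]
      have pdz: "pderiv e \<in> J" if "e \<in> J" for e
      proof -
        have "c * (dz e * dx u - dx e * dz u) \<in> J" by (rule di(2)[OF that])
        hence "g * dz e \<in> J" by (simp add: dxu g_def algebra_simps)
        thus ?thesis using sat by (simp add: dz_def)
      qed
      have pdy: "[:pderiv q:] \<in> J" if "[:q:] \<in> J" for q
      proof -
        have "c * (dx [:q:] * dy u - dy [:q:] * dx u) \<in> J" by (rule di(3)[OF that])
        hence "- (g * [:pderiv q:]) \<in> J" by (simp add: dxu d_c1 g_def algebra_simps)
        hence "g * [:pderiv q:] \<in> J" using ideal_neg[OF J] by fastforce
        thus ?thesis using sat by blast
      qed
      from ex obtain e where e: "e \<in> J" "\<not> [:[:u00:]:] dvd e" using X(1) by blast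
      obtain e0 where e0: "[:e0:] \<in> J" "\<not> [:u00:] dvd e0"
      proof -
        have "\<exists>e0. [:e0:] \<in> J \<and> \<not> [:u00:] dvd e0"
        proof (rule reduce_const[OF pdz ideal_diff[OF J] _ _ e])
          fix q assume "[:[:u00:]:] dvd q" thus "q \<in> J" using ideal_dvd[OF J uJ] X(1) by blast
        next
          fix c' n assume "[:u00:] dvd of_nat (Suc n) * c'"
          thus "[:u00:] dvd c'" using dvd_mult_unit_iff'[OF of_nat_unit2] by blast
        qed
        thus ?thesis using that by blast
      qed
      obtain e00 where e00: "[:e00:] \<in> {q. [:q:] \<in> J}" "\<not> u00 dvd e00"
      proof -
        have "\<exists>e00. [:e00:] \<in> {q. [:q:] \<in> J} \<and> \<not> u00 dvd e00"
        proof (rule reduce_const)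
          fix q assume "q \<in> {q. [:q:] \<in> J}" thus "pderiv q \<in> {q. [:q:] \<in> J}" using pdy by auto
        next
          fix a b assume "a \<in> {q. [:q:] \<in> J}" "b \<in> {q. [:q:] \<in> J}"
          thus "a - b \<in> {q. [:q:] \<in> J}" using ideal_diff[OF J] by fastforce
        next
          fix q assume "[:u00:] dvd q"
          hence "u dvd [:q:]" using X(1) by (simp add: const_poly_dvd_const_poly_iff)
          thus "q \<in> {q. [:q:] \<in> J}" using ideal_dvd[OF J uJ] by blast
        next
          fix c' n assume "u00 dvd of_nat (Suc n) * c'"
          thus "u00 dvd c'" using dvd_mult_unit_iff'[OF of_nat_unit1] by blast
        next
          show "e0 \<in> {q. [:q:] \<in> J}" using e0 by simp
        next
          show "\<not> [:u00:] dvd e0" by (rule e0(2))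
        qed
        thus ?thesis using that by blast
      qed
      obtain A B where AB: "A * u00 + B * e00 = 1" using field_bezout[OF X(3) e00(2)] by blast
      have "[:[:A:]:] * u + [:[:B:]:] * [:[:e00:]:] \<in> J" using uJ e00(1)
        by (intro ideal_add[OF J] ideal_mult[OF J]) auto
      moreover have "[:[:A:]:] * u + [:[:B:]:] * [:[:e00:]:] = 1" using AB X(1)
        by (simp add: one_pCons)
      ultimately show "1 \<in> J" by simp
    qed
    thus ?thesis using ng by blast
  qed
qed



lemma pbr_u_wdec:
  assumes "wdec s t u c" shows "u dvd pbr s t a u"
proof -
  obtain mx my mz where w: "wx s t = c * dx u + u * mx" "wy s t = c * dy u + u * my"
    "wz s t = c * dz u + u * mz" using assms unfolding wdec_def by blast
  have "pbr s t a u = u * ((dy a * dz u - dz a * dy u) * mx + (dz a * dx u - dx a * dz u) * my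
     + (dx a * dy u - dy a * dx u) * mz)"
    unfolding pbr_expand w by (simp add: algebra_simps)
  thus ?thesis by simp
qed

lemma poisson_P_wdec:
  assumes "wdec s t u c" shows "poisson_ideal s t (principal_ideal u)"
  unfolding poisson_ideal_def
proof (intro conjI allI ballI)
  show "is_ideal (principal_ideal u)" by (rule is_ideal_principal)
  fix a b assume "b \<in> principal_ideal u"
  then obtain k where k: "b = u * k" by (auto simp: principal_ideal_iff dvd_def)
  have "pbr s t a b = u * pbr s t a k + k * pbr s t a u" by (simp add: k pbr_mult)
  moreover have "u dvd k * pbr s t a u" using pbr_u_wdec[OF assms] by simp
  ultimately show "pbr s t a b \<in> principal_ideal u" by (simp add: principal_ideal_iff)
qed

lemma RN_of_dvd:
  assumes "u dvd wx s t" "u dvd wy s t" "u dvd wz s t"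
  shows "residually_null s t (principal_ideal u)"
proof -
  have all: "pbr s t a b \<in> principal_ideal u" for a b
    unfolding pbr_expand principal_ideal_iff using assms by (intro dvd_add dvd_diff dvd_mult) auto
  thus ?thesis unfolding residually_null_def poisson_ideal_def using is_ideal_principal by blast
qed

lemma not_all_dvd_derivs:
  assumes irr: "irreducible u"
  shows "\<not> (u dvd dx u \<and> u dvd dy u \<and> u dvd dz u)"
proof -
  consider (Z) "degree u > 0" | (Y) u0 where "u = [:u0:]" "degree u0 > 0"
    | (X) u00 where "u = [:[:u00:]:]" "degree u00 > 0"
    using irr_shape[OF irr] by (elim disjE exE conjE) auto
  thus ?thesis
  proof cases
    case Z thus ?thesis using not_dvd_pderiv[OF Z] by (simp add: dz_def)
  next
    case Y thus ?thesis using not_dvd_pderiv[OF Y(2)] by (simp add: d_c1 const_poly_dvd_const_poly_iff)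
  next
    case X thus ?thesis using not_dvd_pderiv[OF X(2)] by (simp add: d_c2 const_poly_dvd_const_poly_iff)
  qed
qed

lemma notRN_wdec:
  assumes irr: "irreducible u" and nc: "\<not> u dvd c" and wd: "wdec s t u c"
  shows "\<not> residually_null s t (principal_ideal u)"
proof
  assume "residually_null s t (principal_ideal u)"
  hence rn: "u dvd pbr s t a b" for a b unfolding residually_null_def principal_ideal_iff by blast
  have "u dvd wz s t" using rn[of varx vary] by (simp add: pbr_vars)
  moreover have "u dvd wx s t" using rn[of vary varz] by (simp add: pbr_vars)
  moreover have "u dvd wy s t" using rn[of varz varx] by (simp add: pbr_vars)
  moreover obtain mx my mz where w: "wx s t = c * dx u + u * mx" "wy s t = c * dy u + u * my"
    "wz s t = c * dz u + u * mz" using wd unfolding wdec_def by blast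
  ultimately have "u dvd c * dx u" "u dvd c * dy u" "u dvd c * dz u"
    by (metis add_diff_cancel_right' dvd_diff dvd_triv_left)+
  moreover have "prime_elem u" using irr by (simp add: irreducible_imp_prime_elem)
  ultimately have "u dvd dx u \<and> u dvd dy u \<and> u dvd dz u" using nc
    by (simp add: prime_elem_dvd_mult_iff)
  thus False using not_all_dvd_derivs[OF irr] by blast
qed

lemma lin_forms: "varx - const3 a = [:[:[:-a, 1:]:]:]" "vary - const3 b = [:[:[:-b:], 1:]:]"
  by (simp_all add: varx_def vary_def const3_def one_pCons)

lemma not_dvd_both:
  assumes irr: "irreducible u" and d1: "u dvd varx - const3 a" and d2: "u dvd vary - const3 b"
  shows False
proof -
  have "degree u \<le> degree (varx - const3 a)"
    by (rule dvd_imp_degree_le[OF d1]) (simp add: lin_forms)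
  hence "degree u = 0" by (simp add: lin_forms)
  then obtain u0 where u0: "u = [:u0:]" by (rule degree_eq_zeroE)
  have "u0 dvd [:[:-a, 1:]:]" using d1 u0 by (simp add: lin_forms const_poly_dvd_const_poly_iff)
  hence "degree u0 \<le> degree [:[:-a, 1:]:]" by (rule dvd_imp_degree_le) simp
  hence "degree u0 = 0" by simp
  then obtain u00 where u00: "u0 = [:u00:]" by (rule degree_eq_zeroE)
  have "[:u00:] dvd [:[:-b:], 1:]" using d2 u0 u00 by (simp add: lin_forms const_poly_dvd_const_poly_iff)
  hence "u00 dvd coeff [:[:-b:], 1:] 1" using const_poly_dvd_iff by blast
  hence "is_unit u00" by simp
  hence "is_unit u" using u0 u00 by (simp add: is_unit_const_poly_iff)
  thus False using irr by (simp add: irreducible_def)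
qed

lemma P_sub_pt: "ev a b c u = 0 \<Longrightarrow> principal_ideal u \<subseteq> ptideal a b c"
  by (auto simp: principal_ideal_def ptideal_def ev_hom)

lemma P_not_maximal:
  assumes irr: "irreducible u" shows "\<not> is_maximal_ideal (principal_ideal u)"
proof
  assume m: "is_maximal_ideal (principal_ideal u)"
  have "\<not> u dvd 1" using irr by (simp add: irreducible_def)
  then obtain a b c where abc: "ev a b c u = 0" using zero_point[OF irr] by blast
  have "ptideal a b c = principal_ideal u \<or> ptideal a b c = UNIV"
    using m P_sub_pt[OF abc] ptideal_ideal unfolding is_maximal_ideal_def by blast
  hence eq: "ptideal a b c = principal_ideal u" using ptideal_ne by blast
  have "varx - const3 a \<in> ptideal a b c" "vary - const3 b \<in> ptideal a b c"
    by (simp_all add: ptideal_def ev_hom)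
  hence "u dvd varx - const3 a" "u dvd vary - const3 b" unfolding eq principal_ideal_iff by auto
  thus False using not_dvd_both[OF irr] by blast
qed



lemma branch_ne1:
  fixes u :: cpoly3
  assumes irr: "irreducible u" and d: "u dvd wx s t" "u dvd wy s t" "u dvd wz s t"
  shows "residually_null s t (principal_ideal u)" "\<not> poisson_primitive s t (principal_ideal u)"
    "\<not> locally_closed s t (principal_ideal u)"
proof -
  define P where "P = principal_ideal u"
  show rn: "residually_null s t (principal_ideal u)" by (rule RN_of_dvd[OF d])
  have allP: "pbr s t a b \<in> P" for a b using rn unfolding residually_null_def P_def by blast
  show "\<not> poisson_primitive s t (principal_ideal u)"
  proof
    assume "poisson_primitive s t (principal_ideal u)"
    then obtain M where M: "is_maximal_ideal M" "is_poisson_core s t P M"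
      unfolding poisson_primitive_def P_def by blast
    have PM: "P \<subseteq> M" using M(2) unfolding is_poisson_core_def by blast
    have "poisson_ideal s t M" unfolding poisson_ideal_def
      using M(1) allP PM unfolding is_maximal_ideal_def by blast
    hence "M \<subseteq> P" using M(2) unfolding is_poisson_core_def by blast
    hence "M = P" using PM by blast
    thus False using M(1) P_not_maximal[OF irr] P_def by simp
  qed
  show "\<not> locally_closed s t (principal_ideal u)"
  proof
    assume lc: "locally_closed s t (principal_ideal u)"
    have "P = \<Inter>{Q. poisson_prime s t Q \<and> P \<subset> Q}"
    proof
      show "P \<subseteq> \<Inter>{Q. poisson_prime s t Q \<and> P \<subset> Q}" by blast
      show "\<Inter>{Q. poisson_prime s t Q \<and> P \<subset> Q} \<subseteq> P"
      proof
        fix x assume x: "x \<in> \<Inter>{Q. poisson_prime s t Q \<and> P \<subset> Q}"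
        show "x \<in> P"
        proof (rule ccontr)
          assume "x \<notin> P"
          hence "\<not> u dvd x" by (simp add: P_def principal_ideal_iff)
          then obtain a b c where abc: "ev a b c u = 0" "ev a b c x \<noteq> 0"
            using zero_point[OF irr] by blast
          define Q where "Q = ptideal a b c"
          have PQ: "P \<subseteq> Q" using P_sub_pt[OF abc(1)] by (simp add: P_def Q_def)
          have "P \<noteq> Q" using ptideal_maximal P_not_maximal[OF irr] by (auto simp: P_def Q_def)
          moreover have "poisson_prime s t Q" unfolding poisson_prime_def poisson_ideal_def Q_def
            using ptideal_ideal ptideal_prime allP PQ Q_def by blast
          ultimately have "x \<in> Q" using x PQ by blast
          thus False using abc(2) by (simp add: Q_def ptideal_def)
        qed
      qed
    qed
    thus False using lc unfolding locally_closed_def P_def by blast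
  qed
qed

lemma branch_1:
  fixes u :: cpoly3
  assumes irr: "irreducible u" and nc: "\<not> u dvd c" and wd: "wdec s t u c"
  shows "\<not> residually_null s t (principal_ideal u)" "poisson_primitive s t (principal_ideal u)"
    "locally_closed s t (principal_ideal u)"
proof -
  define P where "P = principal_ideal u"
  show "\<not> residually_null s t (principal_ideal u)" by (rule notRN_wdec[OF irr nc wd])
  obtain g where g: "\<not> u dvd g" "keyprop s t u g" using key[OF irr nc wd] by blast
  have PP: "poisson_ideal s t P" unfolding P_def by (rule poisson_P_wdec[OF wd])
  have Ppr: "is_prime_ideal P" unfolding P_def by (rule prime_ideal_principal[OF irr])
  have uP: "u \<in> P" by (simp add: P_def principal_ideal_iff)
  show "locally_closed s t (principal_ideal u)"
    unfolding locally_closed_def P_def[symmetric]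
  proof
    show "poisson_prime s t P" unfolding poisson_prime_def using PP Ppr by blast
    have "g \<in> \<Inter>{Q. poisson_prime s t Q \<and> P \<subset> Q}"
    proof
      fix Q assume "Q \<in> {Q. poisson_prime s t Q \<and> P \<subset> Q}"
      hence Q: "poisson_ideal s t Q" "is_prime_ideal Q" "P \<subset> Q"
        unfolding poisson_prime_def by auto
      show "g \<in> Q"
      proof (rule ccontr)
        assume gQ: "g \<notin> Q"
        have iQ: "is_ideal Q" using Q(2) unfolding is_prime_ideal_def by blast
        have "\<exists>e\<in>Q. \<not> u dvd e" using Q(3) by (auto simp: P_def principal_ideal_iff)
        moreover have "\<forall>e. g * e \<in> Q \<longrightarrow> e \<in> Q" using Q(2) gQ unfolding is_prime_ideal_def by blast
        moreover have "u \<in> Q" using uP Q(3) by blast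
        ultimately have "1 \<in> Q" using g(2) iQ Q(1) unfolding keyprop_def poisson_ideal_def by blast
        hence "Q = UNIV" by (rule ideal_one[OF iQ])
        thus False using Q(2) unfolding is_prime_ideal_def by blast
      qed
    qed
    moreover have "g \<notin> P" using g(1) by (simp add: P_def principal_ideal_iff)
    ultimately show "P \<noteq> \<Inter>{Q. poisson_prime s t Q \<and> P \<subset> Q}" by blast
  qed
  obtain a b c where abc: "ev a b c u = 0" "ev a b c g \<noteq> 0" using zero_point[OF irr g(1)] by blast
  define M where "M = ptideal a b c"
  have PM: "P \<subseteq> M" using P_sub_pt[OF abc(1)] by (simp add: P_def M_def)
  have core: "J \<subseteq> P" if J: "poisson_ideal s t J" "J \<subseteq> M" for J
  proof (rule ccontr)
    assume "\<not> J \<subseteq> P"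
    then obtain e where e0: "e \<in> J" "e \<notin> P" by blast
    hence e: "e \<in> J" "\<not> u dvd e" by (auto simp: P_def principal_ideal_iff)
    have iJ: "is_ideal J" and pJ: "\<forall>a. \<forall>b\<in>J. pbr s t a b \<in> J" using J(1) unfolding poisson_ideal_def by auto
    define I where "I = {j + u * k | j k. j \<in> J}"
    have J0: "0 \<in> J" using iJ unfolding is_ideal_def by blast
    have iI: "is_ideal I" unfolding is_ideal_def
    proof (intro conjI ballI allI)
      show "0 \<in> I" unfolding I_def using J0 by force
      fix x y assume "x \<in> I" "y \<in> I"
      then obtain j1 k1 j2 k2 where "x = j1 + u * k1" "y = j2 + u * k2" "j1 \<in> J" "j2 \<in> J"
        unfolding I_def by blast
      moreover have "j1 + j2 \<in> J" using calculation iJ by (simp add: ideal_add)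
      ultimately show "x + y \<in> I" unfolding I_def
        by (intro CollectI exI[of _ "j1 + j2"] exI[of _ "k1 + k2"]) (simp add: algebra_simps)
    next
      fix r x assume "x \<in> I"
      then obtain j k where "x = j + u * k" "j \<in> J" unfolding I_def by blast
      moreover have "r * j \<in> J" using calculation iJ by (simp add: ideal_mult)
      ultimately show "r * x \<in> I" unfolding I_def
        by (intro CollectI exI[of _ "r * j"] exI[of _ "r * k"]) (simp add: algebra_simps)
    qed
    have JI: "J \<subseteq> I" unfolding I_def by force
    have uI: "u \<in> I" unfolding I_def using J0 by (intro CollectI exI[of _ 0] exI[of _ 1]) simp
    have pI: "pbr s t a x \<in> I" if "x \<in> I" for a x
    proof -
      from that obtain j k where jk: "x = j + u * k" "j \<in> J" unfolding I_def by blast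
      have "pbr s t a (u * k) \<in> P" using PP unfolding poisson_ideal_def by (simp add: P_def principal_ideal_iff)
      then obtain k' where "pbr s t a (u * k) = u * k'" by (auto simp: P_def principal_ideal_iff dvd_def)
      moreover have "pbr s t a j \<in> J" using pJ jk(2) by blast
      ultimately show ?thesis unfolding I_def jk pbr_add by auto
    qed
    define J2 where "J2 = {x. \<exists>n. g ^ n * x \<in> I}"
    have iJ2: "is_ideal J2" unfolding is_ideal_def
    proof (intro conjI ballI allI)
      show "0 \<in> J2" unfolding J2_def using iI unfolding is_ideal_def by auto
      fix x y assume "x \<in> J2" "y \<in> J2"
      then obtain n m where "g ^ n * x \<in> I" "g ^ m * y \<in> I" unfolding J2_def by blast
      hence "g ^ m * (g ^ n * x) + g ^ n * (g ^ m * y) \<in> I"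
        by (intro ideal_add[OF iI]) (simp_all add: ideal_mult[OF iI])
      hence "g ^ (n + m) * (x + y) \<in> I" by (simp add: power_add algebra_simps)
      thus "x + y \<in> J2" unfolding J2_def by blast
    next
      fix r x assume "x \<in> J2"
      then obtain n where "g ^ n * x \<in> I" unfolding J2_def by blast
      hence "r * (g ^ n * x) \<in> I" by (rule ideal_mult[OF iI])
      hence "g ^ n * (r * x) \<in> I" by (simp add: algebra_simps)
      thus "r * x \<in> J2" unfolding J2_def by blast
    qed
    have pJ2: "\<forall>a. \<forall>x\<in>J2. pbr s t a x \<in> J2"
    proof (intro allI ballI)
      fix a x assume "x \<in> J2"
      then obtain n where n: "g ^ n * x \<in> I" unfolding J2_def by blast
      have eq: "g ^ Suc n * pbr s t a x = g * pbr s t a (g ^ n * x) - of_nat n * pbr s t a g * (g ^ n * x)"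
      proof -
        have "g * pbr s t a (g ^ n * x) = g * (g ^ n * pbr s t a x) + x * (g * pbr s t a (g ^ n))"
          by (simp add: pbr_mult algebra_simps)
        also have "\<dots> = g ^ Suc n * pbr s t a x + of_nat n * pbr s t a g * (g ^ n * x)"
          by (simp add: pbr_power algebra_simps)
        finally show ?thesis by simp
      qed
      have "g * pbr s t a (g ^ n * x) - of_nat n * pbr s t a g * (g ^ n * x) \<in> I"
        using ideal_mult[OF iI pI[OF n], of g] ideal_mult[OF iI n, of "of_nat n * pbr s t a g"]
        by (rule ideal_diff[OF iI])
      hence "g ^ Suc n * pbr s t a x \<in> I" using eq by simp
      thus "pbr s t a x \<in> J2" unfolding J2_def by blast
    qed
    have uJ2: "u \<in> J2" unfolding J2_def using uI by (intro CollectI exI[of _ 0]) simp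
    have eJ2: "e \<in> J2" unfolding J2_def using JI e(1) by (intro CollectI exI[of _ 0]) auto
    have sJ2: "\<forall>x. g * x \<in> J2 \<longrightarrow> x \<in> J2"
    proof (intro allI impI)
      fix x assume "g * x \<in> J2"
      then obtain n where "g ^ n * (g * x) \<in> I" unfolding J2_def by blast
      hence "g ^ Suc n * x \<in> I" by (simp add: algebra_simps)
      thus "x \<in> J2" unfolding J2_def by blast
    qed
    have "1 \<in> J2" using g(2) iJ2 pJ2 uJ2 eJ2 e(2) sJ2 unfolding keyprop_def by blast
    then obtain n where "g ^ n * 1 \<in> I" unfolding J2_def by blast
    then obtain j k where jk: "g ^ n = j + u * k" "j \<in> J" unfolding I_def by auto
    have "ev a b c j = 0" using jk(2) J(2) by (auto simp: M_def ptideal_def)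
    hence "ev a b c (g ^ n) = 0" using jk(1) abc(1) by (simp add: ev_hom)
    thus False using abc(2) by (simp add: ev_pow)
  qed
  show "poisson_primitive s t (principal_ideal u)"
    unfolding poisson_primitive_def P_def[symmetric]
  proof (intro conjI exI)
    show "poisson_prime s t P" unfolding poisson_prime_def using PP Ppr by blast
    show "is_maximal_ideal M" unfolding M_def by (rule ptideal_maximal)
    show "is_poisson_core s t P M" unfolding is_poisson_core_def using PP PM core by blast
  qed
qed

theorem lemma3p6:
  fixes s t u :: cpoly3 and lam mu :: complex
  assumes "s \<noteq> 0" and "t \<noteq> 0" and "coprime s t"
    and "(lam, mu) \<noteq> (0, 0)"
    and "irreducible u" and "u dvd (const3 lam * s - const3 mu * t)"
  shows "(poisson_primitive s t (principal_ideal u)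
            \<longleftrightarrow> \<not> residually_null s t (principal_ideal u))
       \<and> (\<not> residually_null s t (principal_ideal u)
            \<longleftrightarrow> multiplicity u (const3 lam * s - const3 mu * t) = 1)
       \<and> (multiplicity u (const3 lam * s - const3 mu * t) = 1
            \<longleftrightarrow> locally_closed s t (principal_ideal u))"
proof (cases "multiplicity u (const3 lam * s - const3 mu * t) = 1")
  case True
  obtain c where c: "\<not> u dvd c" "wdec s t u c" using mult1[OF assms(3,4,5) True] by blast
  show ?thesis using branch_1[OF assms(5) c] True by blast
next
  case False
  have d: "u dvd wx s t" "u dvd wy s t" "u dvd wz s t" using multne1[OF assms(4,5,6) False] by auto
  show ?thesis using branch_ne1[OF assms(5) d] False by blast
qed

end
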